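(* Let $T$ be a permutation tableau. Then $\mathrm{inv}(T)=0$ if and only if $T$ is an L-Bell tableau.
   Context: Permutation tableaux. Draw a Ferrers diagram in English convention: rows are left-justified, row lengths weakly decrease from top to bottom, and every column is nonempty. Rows of length zero are allowed. A permutation tableau $T$ is a filling of the cells of such a diagram with 0's and 1's satisfying two conditions: (i) every column contains at least one 1; (ii) no cell containing 0 has both a 1 above it in its column and a 1 to its left in its row. Its length $n$ is the number of rows plus the number of columns. Labels. The southeast boundary path of $n$ unit south/west steps, from the top-right corner to the bottom-left corner, has its steps labeled $1,\ldots,n$ in order. Each row gets the label of its south step (at the right end of the row), and each column the label of its west step. $(i,j)$ denotes the cell in row $i$ and column $j$. Zeros, ones and rows. A 1 is topmost if there is no 1 above it in its column. A 0 is restricted if there is a 1 above it in its column. A rightmost restricted 0 is a restricted 0 with no restricted 0 to its right in its row. A row is unrestricted if it contains no restricted 0; empty rows are unrestricted. L-Bell tableau. A permutation tableau is an L-Bell tableau if every topmost 1 is also the leftmost 1 of its row, i.e. there is no 1 to its left in the same row. Dots. Black dots are placed on the topmost 1's (one per column), each labeled by its column label. White dots are placed on the rightmost restricted 0's (one per restricted row), each labeled by its row label. Alternating paths. An alternating path is a sequence of dots, identified with the sequence of their labels, built as follows. - From a white dot in cell $(i,j)$, the next dot is the black dot of column $j$. - From a black dot in cell $(i,j)$: if row $i$ is unrestricted, the path ends; otherwise the next dot is the white dot of row $i$. - If $k$ is a column label or the label of a restricted row, $P_k$ is the path starting at the dot labeled $k$. - If $r$ is the label of an unrestricted row, $P_r$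 is the empty path. $P_k$ is contained in a path $P$ if $k$ labels a dot of $P$. Empty paths are contained in no path. Order on paths. Let $P_a,P_b$ be two paths, neither contained in the other. Remove their longest common final segment, obtaining $P'_a,P'_b$. The ending position of $P'_a$ is defined as follows: - if $P'_a$ is nonempty, it is the cell of its last dot; - if $P_a$ is the empty path of an unrestricted row $r$, it is a point at the right end of row $r$, strictly to the right of all its cells. $P_a>P_b$ if the ending position of $P'_a$ is in a strictly lower row than that of $P'_b$, or in the same row and strictly to the right. Otherwise $P_a<P_b$. Inversions. An inversion is a pair $(j,k)$ of labels satisfying all of the following: $j$ is a column label; $j<k$; $k$ is not the label of a dot of $P_j$; and $P_j>P_k$. $\mathrm{inv}(T)$ is the number of inversions. *)

theory Defs
  imports Main
begin

text \<open>A tableau of length n is encoded by its length, the set of row labels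
(labels of the south steps of the boundary path; the remaining labels in
{1..n} are column labels), and the 0/1 filling (True = 1). Rows with larger labels are lower;
columns with larger labels are further to the left.\<close>

record ptab =
  len :: nat
  rowset :: "nat set"
  fill :: "nat \<Rightarrow> nat \<Rightarrow> bool"

definition cols :: "ptab \<Rightarrow> nat set" where
  "cols T = {1..len T} - rowset T"

definition is_cell :: "ptab \<Rightarrow> nat \<Rightarrow> nat \<Rightarrow> bool" where
  "is_cell T i j \<longleftrightarrow> i \<in> rowset T \<and> j \<in> cols T \<and> i < j"

definition perm_tableau :: "ptab \<Rightarrow> bool" where
  "perm_tableau T \<longleftrightarrow>
     rowset T \<subseteq> {1..len T}
   \<and> (\<forall>i j. fill T i j \<longrightarrow> is_cell T i j)
   \<and> (\<forall>j\<in>cols T. \<exists>i. is_cell T i j)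
   \<and> (\<forall>j\<in>cols T. \<exists>i. is_cell T i j \<and> fill T i j)
   \<and> (\<forall>i j. is_cell T i j \<and> \<not> fill T i j \<longrightarrow>
        \<not> ((\<exists>i'. is_cell T i' j \<and> i' < i \<and> fill T i' j)
           \<and> (\<exists>j'. is_cell T i j' \<and> j < j' \<and> fill T i j')))"

definition topmost_one :: "ptab \<Rightarrow> nat \<Rightarrow> nat \<Rightarrow> bool" where
  "topmost_one T i j \<longleftrightarrow> is_cell T i j \<and> fill T i j
     \<and> \<not> (\<exists>i'. is_cell T i' j \<and> i' < i \<and> fill T i' j)"

definition restricted_zero :: "ptab \<Rightarrow> nat \<Rightarrow> nat \<Rightarrow> bool" where
  "restricted_zero T i j \<longleftrightarrow> is_cell T i j \<and> \<not> fill T i j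
     \<and> (\<exists>i'. is_cell T i' j \<and> i' < i \<and> fill T i' j)"

definition restricted_row :: "ptab \<Rightarrow> nat \<Rightarrow> bool" where
  "restricted_row T i \<longleftrightarrow> i \<in> rowset T \<and> (\<exists>j. restricted_zero T i j)"

definition L_Bell :: "ptab \<Rightarrow> bool" where
  "L_Bell T \<longleftrightarrow> (\<forall>i j. topmost_one T i j \<longrightarrow>
      \<not> (\<exists>j'. is_cell T i j' \<and> j < j' \<and> fill T i j'))"

definition top_row :: "ptab \<Rightarrow> nat \<Rightarrow> nat" where
  "top_row T j = (LEAST i. topmost_one T i j)"

text \<open>Column of the white dot (rightmost restricted 0) of row i:
 rightmost = smallest column label.\<close>
definition white_col :: "ptab \<Rightarrow> nat \<Rightarrow> nat" where
  "white_col T i = (LEAST j. restricted_zero T i j)"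

definition dot_cell :: "ptab \<Rightarrow> nat \<Rightarrow> nat \<times> nat" where
  "dot_cell T k = (if k \<in> cols T then (top_row T k, k) else (k, white_col T k))"

definition next_dot :: "ptab \<Rightarrow> nat \<Rightarrow> nat option" where
  "next_dot T k = (if k \<in> cols T
       then (if restricted_row T (top_row T k) then Some (top_row T k) else None)
       else Some (white_col T k))"

fun walk :: "ptab \<Rightarrow> nat \<Rightarrow> nat \<Rightarrow> nat list" where
  "walk T 0 k = [k]"
| "walk T (Suc m) k = k # (case next_dot T k of None \<Rightarrow> [] | Some k' \<Rightarrow> walk T m k')"

text \<open>The alternating path P_k as the list of labels of its dots. Row labels
strictly decrease along a path, so its length is at most 2*(number of rows)+1,
and the fuel 2*len+1 is never exhausted.\<close>
definition path :: "ptab \<Rightarrow> nat \<Rightarrow> nat list" where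
  "path T k = (if k \<in> cols T \<or> restricted_row T k then walk T (2 * len T + 1) k else [])"

definition contained :: "ptab \<Rightarrow> nat \<Rightarrow> nat \<Rightarrow> bool" where
  "contained T a b \<longleftrightarrow> path T a \<noteq> [] \<and> a \<in> set (path T b)"

fun strip_common :: "nat list \<Rightarrow> nat list \<Rightarrow> nat list \<times> nat list" where
  "strip_common (x # xs) (y # ys) = (if x = y then strip_common xs ys else (x # xs, y # ys))"
| "strip_common xs ys = (xs, ys)"

text \<open>Ending position of P'_a (after removing the longest common final segment
with P_b), as (row, column label); the column value 0 encodes the point at the
right end of the row, strictly right of all its cells (column labels are >= 1,
and smaller labels are further right).\<close>
definition end_pos :: "ptab \<Rightarrow> nat \<Rightarrow> nat \<Rightarrow> nat \<times> nat" where
  "end_pos T a b =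
     (let P' = fst (strip_common (rev (path T a)) (rev (path T b)))
      in if P' = [] then (a, 0) else dot_cell T (hd P'))"

definition path_gt :: "ptab \<Rightarrow> nat \<Rightarrow> nat \<Rightarrow> bool" where
  "path_gt T a b \<longleftrightarrow> \<not> contained T a b \<and> \<not> contained T b a \<and>
     (fst (end_pos T a b) > fst (end_pos T b a)
      \<or> (fst (end_pos T a b) = fst (end_pos T b a) \<and> snd (end_pos T a b) < snd (end_pos T b a)))"

definition inversion :: "ptab \<Rightarrow> nat \<Rightarrow> nat \<Rightarrow> bool" where
  "inversion T j k \<longleftrightarrow> j \<in> cols T \<and> j < k \<and> k \<le> len T
     \<and> k \<notin> set (path T j) \<and> path_gt T j k"

definition tab_inv :: "ptab \<Rightarrow> nat" where
  "tab_inv T = card {(j, k). inversion T j k}"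

end

theory Submission
  imports Defs
begin

lemma cols_sub: "cols T \<subseteq> {1..len T}" by (auto simp: cols_def)
lemma cols_row: "j \<in> cols T \<Longrightarrow> j \<notin> rowset T" by (auto simp: cols_def)

lemma top_ex:
  assumes P: "perm_tableau T" and j: "j \<in> cols T"
  shows "topmost_one T (top_row T j) j"
proof -
  from P j obtain i where "is_cell T i j \<and> fill T i j" unfolding perm_tableau_def by blast
  then have ex: "\<exists>i. is_cell T i j \<and> fill T i j" by blast
  define i0 where "i0 = (LEAST i. is_cell T i j \<and> fill T i j)"
  have h: "is_cell T i0 j \<and> fill T i0 j" unfolding i0_def by (rule LeastI_ex[OF ex])
  have "\<not> (\<exists>i'. is_cell T i' j \<and> i' < i0 \<and> fill T i' j)"
    using not_less_Least i0_def by blast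
  then have "topmost_one T i0 j" using h by (simp add: topmost_one_def)
  then show ?thesis unfolding top_row_def by (rule LeastI)
qed

lemma top_unique:
  assumes "topmost_one T r j" "topmost_one T r' j" shows "r = r'"
  using assms unfolding topmost_one_def by (metis linorder_neqE_nat)

lemma top_eq: "perm_tableau T \<Longrightarrow> j \<in> cols T \<Longrightarrow> topmost_one T r j \<Longrightarrow> top_row T j = r"
  using top_ex top_unique by blast

lemma fill_cell: "perm_tableau T \<Longrightarrow> fill T i j \<Longrightarrow> is_cell T i j"
  unfolding perm_tableau_def by blast

lemma top_le:
  assumes P: "perm_tableau T" and f: "fill T r j"
  shows "top_row T j \<le> r"
proof -
  have c: "is_cell T r j" using fill_cell[OF P f] .
  then have j: "j \<in> cols T" by (simp add: is_cell_def)
  have "topmost_one T (top_row T j) j" using top_ex[OF P j] .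
  then show ?thesis using c f unfolding topmost_one_def by (meson not_le)
qed

lemma top_props:
  assumes P: "perm_tableau T" and j: "j \<in> cols T"
  shows "top_row T j < j" "top_row T j \<in> rowset T" "fill T (top_row T j) j"
        "is_cell T (top_row T j) j"
  using top_ex[OF P j] unfolding topmost_one_def is_cell_def by auto

lemma rz_props:
  assumes P: "perm_tableau T" and z: "restricted_zero T r c"
  shows "c \<in> cols T" "r \<in> rowset T" "top_row T c < r" "r < c" "\<not> fill T r c"
proof -
  show "c \<in> cols T" "r \<in> rowset T" "r < c" "\<not> fill T r c"
    using z unfolding restricted_zero_def is_cell_def by auto
  from z obtain i' where "i' < r" "fill T i' c" unfolding restricted_zero_def by blast
  then show "top_row T c < r" using top_le[OF P] by (meson le_less_trans)
qed

lemma rz_left: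
  assumes P: "perm_tableau T" and z: "restricted_zero T r c" and f: "fill T r b"
  shows "b < c"
proof -
  have "is_cell T r b" using fill_cell[OF P f] .
  moreover have "is_cell T r c \<and> \<not> fill T r c \<and> (\<exists>i'. is_cell T i' c \<and> i' < r \<and> fill T i' c)"
    using z unfolding restricted_zero_def by blast
  ultimately have "\<not> c < b" using P f unfolding perm_tableau_def by blast
  moreover have "b \<noteq> c" using z f unfolding restricted_zero_def by auto
  ultimately show ?thesis by simp
qed

lemma white_props:
  assumes P: "perm_tableau T" and r: "restricted_row T r"
  shows "restricted_zero T r (white_col T r)"
  using r unfolding restricted_row_def white_col_def by (meson LeastI)

lemma white_le: "restricted_zero T r c \<Longrightarrow> white_col T r \<le> c"
  unfolding white_col_def by (rule Least_le)

lemma row_le_len: "perm_tableau T \<Longrightarrow> r \<in> rowset T \<Longrightarrow> 1 \<le> r \<and> r \<le> len T"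
  unfolding perm_tableau_def by auto

definition fuel_ok :: "ptab \<Rightarrow> nat \<Rightarrow> nat \<Rightarrow> bool" where
  "fuel_ok T k m \<longleftrightarrow> (k \<in> cols T \<and> 2 * top_row T k < m) \<or> (restricted_row T k \<and> 2 * k \<le> m)"

lemma rr_row: "restricted_row T r \<Longrightarrow> r \<in> rowset T \<and> r \<notin> cols T"
  unfolding restricted_row_def cols_def by auto

lemma walk_step:
  assumes P: "perm_tableau T"
  shows "fuel_ok T k m \<Longrightarrow> walk T (Suc m) k = walk T m k"
proof (induction m arbitrary: k)
  case 0
  then have "restricted_row T k" "k = 0" unfolding fuel_ok_def by auto
  then show ?case using row_le_len[OF P] rr_row by (metis not_one_le_zero)
next
  case (Suc m)
  show ?case
  proof (cases "k \<in> cols T")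
    case True
    then have lt: "2 * top_row T k < Suc m" using Suc.prems unfolding fuel_ok_def
      using rr_row by blast
    show ?thesis
    proof (cases "restricted_row T (top_row T k)")
      case True
      then have "fuel_ok T (top_row T k) m" using lt unfolding fuel_ok_def by simp
      then show ?thesis using Suc.IH True \<open>k \<in> cols T\<close> by (simp add: next_dot_def)
    next
      case False
      then show ?thesis using \<open>k \<in> cols T\<close> by (simp add: next_dot_def)
    qed
  next
    case False
    then have r: "restricted_row T k" "2 * k \<le> Suc m" using Suc.prems unfolding fuel_ok_def by auto
    define w where "w = white_col T k"
    have z: "restricted_zero T k w" using white_props[OF P r(1)] w_def by simp
    have "w \<in> cols T" "top_row T w < k" using rz_props[OF P z] by auto
    then have "fuel_ok T w m" using r(2) unfolding fuel_ok_def by auto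
    then show ?thesis using Suc.IH False by (simp add: next_dot_def w_def)
  qed
qed

lemma walk_stable:
  assumes P: "perm_tableau T" and f: "fuel_ok T k m" and mn: "m \<le> n"
  shows "walk T n k = walk T m k"
  using mn
proof (induction n)
  case 0 then show ?case by simp
next
  case (Suc n)
  show ?case
  proof (cases "m = Suc n")
    case False
    then have "m \<le> n" using Suc.prems by simp
    moreover have "fuel_ok T k n" using f \<open>m \<le> n\<close> unfolding fuel_ok_def by auto
    ultimately show ?thesis using Suc.IH walk_step[OF P] by simp
  qed simp
qed

lemma path_def_col: "k \<in> cols T \<or> restricted_row T k \<Longrightarrow> path T k = walk T (Suc (2 * len T)) k"
  unfolding path_def by simp

lemma walk_Suc: "walk T (Suc m) k = k # (case next_dot T k of None \<Rightarrow> [] | Some k' \<Rightarrow> walk T m k')"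
  by simp

lemma path_col:
  assumes P: "perm_tableau T" and c: "c \<in> cols T"
  shows "path T c = c # (if restricted_row T (top_row T c) then path T (top_row T c) else [])"
proof (cases "restricted_row T (top_row T c)")
  case True
  have "top_row T c \<le> len T" using row_le_len[OF P top_props(2)[OF P c]] by simp
  then have "fuel_ok T (top_row T c) (2 * len T)" using True unfolding fuel_ok_def by simp
  then have e: "walk T (Suc (2 * len T)) (top_row T c) = walk T (2 * len T) (top_row T c)"
    using walk_step[OF P] by blast
  have "path T c = c # walk T (2 * len T) (top_row T c)"
    using path_def_col[of c T] c walk_Suc[of T "2 * len T" c] True by (simp add: next_dot_def)
  also have "\<dots> = c # path T (top_row T c)" using e path_def_col[of "top_row T c" T] True by simp
  finally show ?thesis using True by simp
next
  case False
  then show ?thesis using path_def_col[of c T] c walk_Suc[of T "2 * len T" c] by (simp add: next_dot_def)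
qed

lemma path_row:
  assumes P: "perm_tableau T" and r: "restricted_row T r"
  shows "path T r = r # path T (white_col T r)"
proof -
  have rc: "r \<notin> cols T" using rr_row[OF r] by simp
  define w where "w = white_col T r"
  have z: "restricted_zero T r w" using white_props[OF P r] w_def by simp
  have w: "w \<in> cols T" "top_row T w < r" using rz_props[OF P z] by auto
  have "r \<le> len T" using row_le_len[OF P] rr_row[OF r] by simp
  then have "fuel_ok T w (2 * len T)" using w unfolding fuel_ok_def by simp
  then have e: "walk T (Suc (2 * len T)) w = walk T (2 * len T) w" using walk_step[OF P] by blast
  have "path T r = r # walk T (2 * len T) w"
    using path_def_col[of r T] r walk_Suc[of T "2 * len T" r] rc by (simp add: next_dot_def w_def)
  also have "\<dots> = r # path T w" using e w path_def_col[of w T] by simp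
  finally show ?thesis by (simp add: w_def)
qed

lemma path_unr: "k \<notin> cols T \<Longrightarrow> \<not> restricted_row T k \<Longrightarrow> path T k = []"
  by (simp add: path_def)

lemma white_facts:
  assumes P: "perm_tableau T" and c: "c \<in> cols T" and r: "restricted_row T (top_row T c)"
  shows "white_col T (top_row T c) \<in> cols T" "c < white_col T (top_row T c)"
        "top_row T (white_col T (top_row T c)) < top_row T c"
proof -
  have z: "restricted_zero T (top_row T c) (white_col T (top_row T c))" using white_props[OF P r] .
  show "white_col T (top_row T c) \<in> cols T" "top_row T (white_col T (top_row T c)) < top_row T c"
    using rz_props[OF P z] by auto
  show "c < white_col T (top_row T c)" using rz_left[OF P z top_props(3)[OF P c]] .
qed

lemma path_col2:
  assumes P: "perm_tableau T" and c: "c \<in> cols T"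
  shows "path T c = c # (if restricted_row T (top_row T c)
     then top_row T c # path T (white_col T (top_row T c)) else [])"
  using path_col[OF P c] path_row[OF P] by simp

lemma col_path_inv:
  assumes P: "perm_tableau T"
  shows "c \<in> cols T \<Longrightarrow> z \<in> set (path T c) \<Longrightarrow>
     (z \<in> cols T \<longrightarrow> c \<le> z \<and> top_row T z \<le> top_row T c) \<and>
     (z \<notin> cols T \<longrightarrow> z \<le> top_row T c \<and> restricted_row T z)"
proof (induction "top_row T c" arbitrary: c rule: less_induct)
  case less
  show ?case
  proof (cases "restricted_row T (top_row T c)")
    case True
    define w where "w = white_col T (top_row T c)"
    have w: "w \<in> cols T" "c < w" "top_row T w < top_row T c"
      using white_facts[OF P less.prems(1) True] w_def by auto
    have pe: "path T c = c # top_row T c # path T w" using path_col2[OF P less.prems(1)] True w_def by simp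
    have "z = c \<or> z = top_row T c \<or> z \<in> set (path T w)" using less.prems(2) pe by auto
    moreover have "z = top_row T c \<Longrightarrow> z \<notin> cols T" using top_props(2)[OF P less.prems(1)] cols_row by blast
    moreover have "z \<in> set (path T w) \<Longrightarrow> ?thesis" using less.hyps[OF w(3) w(1)] w by force
    ultimately show ?thesis using True less.prems(1) w(2) by auto
  next
    case False
    then show ?thesis using path_col2[OF P less.prems(1)] less.prems by auto
  qed
qed

lemma col_path_last:
  assumes P: "perm_tableau T"
  shows "c \<in> cols T \<Longrightarrow> path T c \<noteq> [] \<and> last (path T c) \<in> cols T \<and>
      \<not> restricted_row T (top_row T (last (path T c)))"
proof (induction "top_row T c" arbitrary: c rule: less_induct)
  case less
  show ?case
  proof (cases "restricted_row T (top_row T c)")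
    case True
    define w where "w = white_col T (top_row T c)"
    have w: "w \<in> cols T" "c < w" "top_row T w < top_row T c"
      using white_facts[OF P less.prems(1) True] w_def by auto
    have pe: "path T c = c # top_row T c # path T w" using path_col2[OF P less.prems(1)] True w_def by simp
    show ?thesis using less.hyps[OF w(3) w(1)] pe by simp
  next
    case False
    then show ?thesis using path_col2[OF P less.prems(1)] less.prems by auto
  qed
qed

lemma col_path_suffix:
  assumes P: "perm_tableau T"
  shows "c \<in> cols T \<Longrightarrow> z \<in> set (path T c) \<Longrightarrow> z \<in> cols T \<Longrightarrow> z \<noteq> c \<Longrightarrow>
     \<exists>pre r. path T c = pre @ r # path T z \<and> restricted_row T r \<and> white_col T r = z
        \<and> r \<le> top_row T c \<and> r \<notin> cols T"
proof (induction "top_row T c" arbitrary: c rule: less_induct)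
  case less
  show ?case
  proof (cases "restricted_row T (top_row T c)")
    case True
    define w where "w = white_col T (top_row T c)"
    have w: "w \<in> cols T" "c < w" "top_row T w < top_row T c"
      using white_facts[OF P less.prems(1) True] w_def by auto
    have pe: "path T c = c # top_row T c # path T w" using path_col2[OF P less.prems(1)] True w_def by simp
    have tc: "top_row T c \<notin> cols T" using top_props(2)[OF P less.prems(1)] cols_row by blast
    have zin: "z \<in> set (path T w)" using less.prems pe tc by auto
    show ?thesis
    proof (cases "z = w")
      case True
      then show ?thesis using pe \<open>restricted_row T (top_row T c)\<close> w_def tc
        by (intro exI[of _ "[c]"] exI[of _ "top_row T c"]) simp
    next
      case False
      obtain pre r where "path T w = pre @ r # path T z" "restricted_row T r" "white_col T r = z"
         "r \<le> top_row T w" "r \<notin> cols T"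
        using less.hyps[OF w(3) w(1) zin less.prems(3) False] by blast
      then show ?thesis using pe w(3)
        by (intro exI[of _ "c # top_row T c # pre"] exI[of _ r]) simp
    qed
  next
    case False
    then show ?thesis using path_col2[OF P less.prems(1)] less.prems by auto
  qed
qed

lemma sc_swap: "strip_common B A = prod.swap (strip_common A B)"
proof (induction A arbitrary: B)
  case Nil then show ?case by (cases B) auto
next
  case (Cons x xs) then show ?case by (cases B) auto
qed

lemma sc_app: "fst (strip_common A B) \<noteq> [] \<Longrightarrow>
   strip_common (A @ C) B = (fst (strip_common A B) @ C, snd (strip_common A B))"
  by (induction A B rule: strip_common.induct) auto

lemma sc_ne: "A \<noteq> [] \<Longrightarrow> last A \<notin> set B \<Longrightarrow> fst (strip_common A B) \<noteq> []"
proof (induction A B rule: strip_common.induct)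
  case (1 x xs y ys)
  then show ?case by (cases "xs = []") auto
qed auto

lemma sc_common: "strip_common (C @ A) (C @ B) = strip_common A B"
  by (induction C) auto

lemma sc_diff: "A \<noteq> [] \<Longrightarrow> B \<noteq> [] \<Longrightarrow> hd A \<noteq> hd B \<Longrightarrow> strip_common A B = (A, B)"
  by (cases A; cases B) auto

lemma ep_transfer:
  assumes pa: "path T a = pre @ path T a'" and ne: "path T a' \<noteq> []"
    and nin: "hd (path T a') \<notin> set (path T b)"
  shows "end_pos T a b = end_pos T a' b" "end_pos T b a = end_pos T b a'"
proof -
  define A' where "A' = fst (strip_common (rev (path T a')) (rev (path T b)))"
  define B' where "B' = snd (strip_common (rev (path T a')) (rev (path T b)))"
  have "A' \<noteq> []" unfolding A'_def using ne nin by (intro sc_ne) (auto simp: last_rev)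
  then have s: "strip_common (rev (path T a)) (rev (path T b)) = (A' @ rev pre, B')"
    using sc_app[of "rev (path T a')" "rev (path T b)" "rev pre"] pa A'_def B'_def by simp
  have s2: "strip_common (rev (path T a')) (rev (path T b)) = (A', B')" using A'_def B'_def by simp
  show "end_pos T a b = end_pos T a' b" using s s2 \<open>A' \<noteq> []\<close> by (simp add: end_pos_def Let_def)
  have "strip_common (rev (path T b)) (rev (path T a)) = (B', A' @ rev pre)"
       "strip_common (rev (path T b)) (rev (path T a')) = (B', A')"
    using s s2 sc_swap by (metis prod.swap_def fst_conv snd_conv)+
  then show "end_pos T b a = end_pos T b a'" by (simp add: end_pos_def Let_def)
qed

lemma ep_diff:
  assumes "path T a \<noteq> []" "path T b \<noteq> []" "last (path T a) \<noteq> last (path T b)"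
  shows "end_pos T a b = dot_cell T (last (path T a))"
proof -
  have "strip_common (rev (path T a)) (rev (path T b)) = (rev (path T a), rev (path T b))"
    using assms by (intro sc_diff) (auto simp: hd_rev)
  then show ?thesis using assms by (simp add: end_pos_def Let_def hd_rev)
qed

lemma ep_emptyb:
  assumes "path T a \<noteq> []" "path T b = []"
  shows "end_pos T a b = dot_cell T (last (path T a))"
proof -
  have "strip_common (rev (path T a)) (rev (path T b)) = (rev (path T a), [])"
    using assms by (cases "rev (path T a)") auto
  then show ?thesis using assms by (simp add: end_pos_def Let_def hd_rev)
qed

lemma ep_emptya: "path T a = [] \<Longrightarrow> end_pos T a b = (a, 0)"
  by (simp add: end_pos_def Let_def)

lemma ep_merge:
  assumes "path T a = pre @ Q" "path T b = pre' @ Q" "pre \<noteq> []" "pre' \<noteq> []" "last pre \<noteq> last pre'"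
  shows "end_pos T a b = dot_cell T (last pre)"
proof -
  have "strip_common (rev (path T a)) (rev (path T b)) = strip_common (rev pre) (rev pre')"
    using assms(1,2) sc_common by simp
  also have "\<dots> = (rev pre, rev pre')" using assms(3-5) by (intro sc_diff) (auto simp: hd_rev)
  finally show ?thesis using assms(3) by (simp add: end_pos_def Let_def hd_rev)
qed

definition G :: "ptab \<Rightarrow> nat \<Rightarrow> bool" where
  "G T B \<longleftrightarrow> (\<forall>r c b. r < B \<longrightarrow> topmost_one T r c \<longrightarrow> is_cell T r b \<longrightarrow> c < b \<longrightarrow> \<not> fill T r b)"

definition posgt :: "nat \<times> nat \<Rightarrow> nat \<times> nat \<Rightarrow> bool" where
  "posgt p q \<longleftrightarrow> fst q < fst p \<or> (fst p = fst q \<and> snd p < snd q)"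

lemma dot_col: "c \<in> cols T \<Longrightarrow> dot_cell T c = (top_row T c, c)"
  by (simp add: dot_cell_def)
lemma dot_row: "r \<notin> cols T \<Longrightarrow> dot_cell T r = (r, white_col T r)"
  by (simp add: dot_cell_def)

lemma G_W:
  assumes P: "perm_tableau T" and g: "G T B" and x: "x \<in> cols T" "top_row T x < B"
    and c: "c \<in> cols T" "x < c" "top_row T c < top_row T x"
  shows "restricted_zero T (top_row T x) c"
proof -
  have tx: "topmost_one T (top_row T x) x" using top_ex[OF P x(1)] .
  have cell: "is_cell T (top_row T x) c" using top_props[OF P x(1)] c unfolding is_cell_def by auto
  have nf: "\<not> fill T (top_row T x) c" using g tx cell c(2) x(2) unfolding G_def by blast
  have "is_cell T (top_row T c) c" "fill T (top_row T c) c" using top_props[OF P c(1)] by auto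
  then show ?thesis using cell nf c(3) unfolding restricted_zero_def by blast
qed

lemma G_dist:
  assumes P: "perm_tableau T" and g: "G T B" and x: "x \<in> cols T" "top_row T x < B"
    and y: "y \<in> cols T" "x < y"
  shows "top_row T y \<noteq> top_row T x"
proof
  assume e: "top_row T y = top_row T x"
  have tx: "topmost_one T (top_row T x) x" using top_ex[OF P x(1)] .
  have "is_cell T (top_row T x) y" "fill T (top_row T x) y" using top_props[OF P y(1)] e by auto
  then show False using g tx y(2) x(2) unfolding G_def by blast
qed

lemma G_unres:
  assumes P: "perm_tableau T" and g: "G T B" and x: "x \<in> cols T" "top_row T x < B"
    and u: "\<not> restricted_row T (top_row T x)" and c: "c \<in> cols T" "x < c"
  shows "top_row T x < top_row T c"
proof -
  have "\<not> top_row T c < top_row T x"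
  proof
    assume "top_row T c < top_row T x"
    then have "restricted_zero T (top_row T x) c" using G_W[OF P g x c] by blast
    then show False using u top_props(2)[OF P x(1)] unfolding restricted_row_def by blast
  qed
  moreover have "top_row T c \<noteq> top_row T x" using G_dist[OF P g x c] .
  ultimately show ?thesis by simp
qed

lemma path_last_facts:
  assumes P: "perm_tableau T" and c: "c \<in> cols T"
  shows "path T c \<noteq> []" "last (path T c) \<in> cols T" "c \<le> last (path T c)"
    "top_row T (last (path T c)) \<le> top_row T c"
  using col_path_last[OF P c] col_path_inv[OF P c, of "last (path T c)"] by auto

lemma lemC:
  assumes P: "perm_tableau T" and g: "G T B"
  shows "x \<in> cols T \<Longrightarrow> y \<in> cols T \<Longrightarrow> x < y \<Longrightarrow> top_row T x < B \<Longrightarrow> top_row T y < B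
     \<Longrightarrow> y \<notin> set (path T x) \<Longrightarrow> posgt (end_pos T y x) (end_pos T x y)"
proof (induction "top_row T x + top_row T y" arbitrary: x y rule: less_induct)
  case less
  note xc = less.prems(1) and yc = less.prems(2) and xy = less.prems(3)
    and xB = less.prems(4) and yB = less.prems(5) and ynin = less.prems(6)
  have colsy: "\<And>z. z \<in> set (path T y) \<Longrightarrow> z \<in> cols T \<Longrightarrow> y \<le> z"
    using col_path_inv[OF P yc] by blast
  have rowsy: "\<And>z. z \<in> set (path T y) \<Longrightarrow> z \<notin> cols T \<Longrightarrow> z \<le> top_row T y"
    using col_path_inv[OF P yc] by blast
  have rowsx: "\<And>z. z \<in> set (path T x) \<Longrightarrow> z \<notin> cols T \<Longrightarrow> z \<le> top_row T x"
    using col_path_inv[OF P xc] by blast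
  show ?case
  proof (cases "restricted_row T (top_row T x)")
    case False
    have px: "path T x = [x]" using path_col2[OF P xc] False by simp
    note ly = path_last_facts[OF P yc]
    define y' where "y' = last (path T y)"
    have "x < y'" using ly xy y'_def by simp
    then have lt: "top_row T x < top_row T y'" using G_unres[OF P g xc xB False] ly(2) y'_def by simp
    have "end_pos T x y = dot_cell T x" using ep_diff[of T x y] px ly(1) \<open>x < y'\<close> y'_def by simp
    moreover have "end_pos T y x = dot_cell T y'" using ep_diff[of T y x] px ly(1) \<open>x < y'\<close> y'_def by simp
    ultimately show ?thesis using lt dot_col xc ly(2) y'_def by (simp add: posgt_def)
  next
    case True
    define w where "w = white_col T (top_row T x)"
    have w: "w \<in> cols T" "x < w" "top_row T w < top_row T x"
      using white_facts[OF P xc True] w_def by auto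
    have px: "path T x = [x, top_row T x] @ path T w" using path_col2[OF P xc] True w_def by simp
    have pw: "path T w = w # (if restricted_row T (top_row T w)
     then top_row T w # path T (white_col T (top_row T w)) else [])" using path_col2[OF P w(1)] .
    show ?thesis
    proof (cases "top_row T y < top_row T x")
      case True
      have "restricted_zero T (top_row T x) y" using G_W[OF P g xc xB yc xy True] .
      then have "w \<le> y" using white_le w_def by simp
      moreover have "w \<noteq> y" using ynin px pw by auto
      ultimately have wy: "w < y" by simp
      have ih: "posgt (end_pos T y w) (end_pos T w y)"
        using less.hyps[of w y] w True wy yc ynin px xB by auto
      have "w \<notin> set (path T y)" using colsy wy w(1) by fastforce
      then have "end_pos T x y = end_pos T w y" "end_pos T y x = end_pos T y w"
        using ep_transfer[OF px] pw by simp_all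
      then show ?thesis using ih by simp
    next
      case False
      have ne: "top_row T y \<noteq> top_row T x" using G_dist[OF P g xc xB yc xy] .
      with False have txy: "top_row T x < top_row T y" by simp
      show ?thesis
      proof (cases "restricted_row T (top_row T y)")
        case False
        have py: "path T y = [y]" using path_col2[OF P yc] False by simp
        note lx = path_last_facts[OF P xc]
        define x' where "x' = last (path T x)"
        have "x' \<noteq> y" using ynin lx(1) x'_def by auto
        have "end_pos T y x = dot_cell T y" using ep_diff[of T y x] py lx(1) \<open>x' \<noteq> y\<close> x'_def by simp
        moreover have "end_pos T x y = dot_cell T x'" using ep_diff[of T x y] py lx(1) \<open>x' \<noteq> y\<close> x'_def by simp
        ultimately show ?thesis using txy lx dot_col yc x'_def by (simp add: posgt_def)
      next
        case True
        define w' where "w' = white_col T (top_row T y)"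
        have w': "w' \<in> cols T" "y < w'" "top_row T w' < top_row T y"
          using white_facts[OF P yc True] w'_def by auto
        have py: "path T y = [y, top_row T y] @ path T w'" using path_col2[OF P yc] True w'_def by simp
        have pw': "hd (path T w') = w'" "path T w' \<noteq> []" using path_col2[OF P w'(1)] by (simp_all del: path_col2)
        have tyc: "top_row T y \<notin> cols T" using top_props(2)[OF P yc] cols_row by blast
        show ?thesis
        proof (cases "w' \<in> set (path T x)")
          case True
          obtain pre r where pr: "path T x = pre @ r # path T w'" "restricted_row T r" "white_col T r = w'"
            "r \<le> top_row T x" "r \<notin> cols T"
            using col_path_suffix[OF P xc True w'(1)] w'(2) xy by force
          have "end_pos T x y = dot_cell T r"
            using ep_merge[of T x "pre @ [r]" "path T w'" y "[y, top_row T y]"] pr py txy by simp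
          moreover have "end_pos T y x = dot_cell T (top_row T y)"
            using ep_merge[of T y "[y, top_row T y]" "path T w'" x "pre @ [r]"] pr py txy by simp
          ultimately show ?thesis using pr tyc dot_row txy w'_def by (simp add: posgt_def)
        next
          case False
          have ih: "posgt (end_pos T w' x) (end_pos T x w')"
            using less.hyps[of x w'] w' xy xc False xB yB by auto
          have "end_pos T y x = end_pos T w' x" "end_pos T x y = end_pos T x w'"
            using ep_transfer[OF py pw'(2)] pw'(1) False by simp_all
          then show ?thesis using ih by simp
        qed
      qed
    qed
  qed
qed

lemma posgt_asym: "posgt p q \<Longrightarrow> \<not> posgt q p"
  unfolding posgt_def by auto

lemma path_gt_posgt: "path_gt T a b \<longleftrightarrow> \<not> contained T a b \<and> \<not> contained T b a \<and>
   posgt (end_pos T a b) (end_pos T b a)"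
  unfolding path_gt_def posgt_def by auto

lemma LBell_G: "L_Bell T \<Longrightarrow> G T B"
  unfolding L_Bell_def G_def by blast

lemma top_le_len: "perm_tableau T \<Longrightarrow> c \<in> cols T \<Longrightarrow> top_row T c < Suc (len T)"
  using row_le_len top_props(2) by (metis le_imp_less_Suc)

lemma LBell_noinv:
  assumes P: "perm_tableau T" and L: "L_Bell T" and inv: "inversion T j k"
  shows False
proof -
  define B where "B = Suc (len T)"
  have g: "G T B" using LBell_G[OF L] .
  have j: "j \<in> cols T" "j < k" "k \<le> len T" "k \<notin> set (path T j)" "path_gt T j k"
    using inv unfolding inversion_def by auto
  have jB: "top_row T j < B" using top_le_len[OF P j(1)] B_def by simp
  have tj: "top_row T j < j" using top_props(1)[OF P j(1)] .
  have rowsj: "\<And>z. z \<in> set (path T j) \<Longrightarrow> z \<notin> cols T \<Longrightarrow> z \<le> top_row T j"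
    using col_path_inv[OF P j(1)] by blast
  have "posgt (end_pos T k j) (end_pos T j k)"
  proof (cases "k \<in> cols T")
    case True
    then show ?thesis using lemC[OF P g j(1) True j(2) jB _ j(4)] top_le_len[OF P True] B_def by simp
  next
    case kc: False
    show ?thesis
    proof (cases "restricted_row T k")
      case True
      define w where "w = white_col T k"
      have z: "restricted_zero T k w" using white_props[OF P True] w_def by simp
      have w: "w \<in> cols T" "k < w" "top_row T w < k" using rz_props[OF P z] by auto
      have pk: "path T k = [k] @ path T w" using path_row[OF P True] w_def by simp
      have pw: "hd (path T w) = w" "path T w \<noteq> []" using path_col2[OF P w(1)] by (simp_all del: path_col2)
      show ?thesis
      proof (cases "w \<in> set (path T j)")
        case True
        obtain pre r where pr: "path T j = pre @ r # path T w" "restricted_row T r" "white_col T r = w"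
            "r \<le> top_row T j" "r \<notin> cols T"
          using col_path_suffix[OF P j(1) True w(1)] w(2) j(2) by force
        have "end_pos T j k = dot_cell T r"
          using ep_merge[of T j "pre @ [r]" "path T w" k "[k]"] pr pk tj j(2) by simp
        moreover have "end_pos T k j = dot_cell T k"
          using ep_merge[of T k "[k]" "path T w" j "pre @ [r]"] pr pk tj j(2) by simp
        ultimately show ?thesis using pr kc dot_row tj j(2) w_def by (simp add: posgt_def)
      next
        case False
        have ih: "posgt (end_pos T w j) (end_pos T j w)"
          using lemC[OF P g j(1) w(1) _ jB _ False] j(2) w top_le_len[OF P w(1)] B_def by simp
        have "end_pos T k j = end_pos T w j" "end_pos T j k = end_pos T j w"
          using ep_transfer[OF pk pw(2)] pw(1) False by simp_all
        then show ?thesis using ih by simp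
      qed
    next
      case False
      have pk: "path T k = []" using path_unr[OF kc False] .
      note lj = path_last_facts[OF P j(1)]
      have "end_pos T k j = (k, 0)" using ep_emptya pk by simp
      moreover have "end_pos T j k = dot_cell T (last (path T j))" using ep_emptyb lj(1) pk by simp
      ultimately show ?thesis using lj dot_col tj j(2) by (simp add: posgt_def)
    qed
  qed
  then show False using j(5) posgt_asym path_gt_posgt by blast
qed

lemma notLBell_inv:
  assumes P: "perm_tableau T" and L: "\<not> L_Bell T"
  shows "\<exists>j k. inversion T j k"
proof -
  define viol where "viol r \<longleftrightarrow> (\<exists>j b. topmost_one T r j \<and> is_cell T r b \<and> j < b \<and> fill T r b)" for r
  have ex: "\<exists>r. viol r" using L unfolding L_Bell_def viol_def by blast
  define i where "i = (LEAST r. viol r)"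
  have vi: "viol i" unfolding i_def using LeastI_ex[OF ex] .
  have g: "G T i" unfolding G_def using not_less_Least[of _ viol] i_def viol_def by blast
  obtain j b where jb: "topmost_one T i j" "is_cell T i b" "j < b" "fill T i b"
    using vi viol_def by blast
  have jc: "j \<in> cols T" using jb(1) unfolding topmost_one_def is_cell_def by simp
  have bc: "b \<in> cols T" using jb(2) unfolding is_cell_def by simp
  have ic: "i \<notin> cols T" using jb(2) cols_row unfolding is_cell_def by blast
  have tj: "top_row T j = i" using top_eq[OF P jc jb(1)] .
  have tb: "top_row T b \<le> i" using top_le[OF P jb(4)] .
  have colsb: "\<And>z. z \<in> set (path T b) \<Longrightarrow> z \<in> cols T \<Longrightarrow> b \<le> z"
    using col_path_inv[OF P bc] by blast
  have jnb: "j \<notin> set (path T b)" using colsb jc jb(3) by fastforce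
  have bnj: "b \<notin> set (path T j)"
  proof (cases "restricted_row T i")
    case True
    define w where "w = white_col T i"
    have z: "restricted_zero T i w" using white_props[OF P True] w_def by simp
    have w: "w \<in> cols T" "b < w" using rz_props[OF P z] rz_left[OF P z jb(4)] by auto
    have "path T j = j # i # path T w" using path_col2[OF P jc] tj True w_def by simp
    then show ?thesis using col_path_inv[OF P w(1)] w jb(3) ic bc by fastforce
  next
    case False
    then show ?thesis using path_col2[OF P jc] tj jb(3) by simp
  qed
  have pos: "posgt (end_pos T j b) (end_pos T b j)"
  proof (cases "top_row T b = i")
    case True
    define Q where "Q = (if restricted_row T i then path T i else [])"
    have pj: "path T j = [j] @ Q" using path_col[OF P jc] tj Q_def by simp
    have pb: "path T b = [b] @ Q" using path_col[OF P bc] True Q_def by simp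
    have "end_pos T j b = dot_cell T j" using ep_merge[OF pj pb] jb(3) by simp
    moreover have "end_pos T b j = dot_cell T b" using ep_merge[OF pb pj] jb(3) by simp
    ultimately show ?thesis using dot_col jc bc tj True jb(3) by (simp add: posgt_def)
  next
    case False
    with tb have tbi: "top_row T b < i" by simp
    note lb = path_last_facts[OF P bc]
    have rowsb: "\<And>z. z \<in> set (path T b) \<Longrightarrow> z \<notin> cols T \<Longrightarrow> z \<le> top_row T b"
      using col_path_inv[OF P bc] by blast
    show ?thesis
    proof (cases "restricted_row T i")
      case False
      have pj: "path T j = [j]" using path_col2[OF P jc] tj False by simp
      have "last (path T b) \<noteq> j" using jnb lb(1) by auto
      then have "end_pos T j b = dot_cell T j" "end_pos T b j = dot_cell T (last (path T b))"
        using ep_diff[of T j b] ep_diff[of T b j] pj lb(1) by auto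
      then show ?thesis using dot_col jc lb tj tbi by (simp add: posgt_def)
    next
      case True
      define w where "w = white_col T i"
      have z: "restricted_zero T i w" using white_props[OF P True] w_def by simp
      have w: "w \<in> cols T" "b < w" "top_row T w < i" using rz_props[OF P z] rz_left[OF P z jb(4)] by auto
      have pj: "path T j = [j, i] @ path T w" using path_col2[OF P jc] tj True w_def by simp
      have pw: "hd (path T w) = w" "path T w \<noteq> []" using path_col2[OF P w(1)] by (simp_all del: path_col2)
      show ?thesis
      proof (cases "w \<in> set (path T b)")
        case True
        obtain pre r where pr: "path T b = pre @ r # path T w" "restricted_row T r" "white_col T r = w"
            "r \<le> top_row T b" "r \<notin> cols T"
          using col_path_suffix[OF P bc True w(1)] w(2) by force
        have "end_pos T j b = dot_cell T i"
          using ep_merge[of T j "[j, i]" "path T w" b "pre @ [r]"] pr pj tbi by simp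
        moreover have "end_pos T b j = dot_cell T r"
          using ep_merge[of T b "pre @ [r]" "path T w" j "[j, i]"] pr pj tbi by simp
        ultimately show ?thesis using pr ic dot_row tbi w_def by (simp add: posgt_def)
      next
        case False
        have ih: "posgt (end_pos T w b) (end_pos T b w)"
          using lemC[OF P g bc w(1) w(2) tbi w(3) False] .
        have "end_pos T j b = end_pos T w b" "end_pos T b j = end_pos T b w"
          using ep_transfer[OF pj pw(2)] pw(1) False by simp_all
        then show ?thesis using ih by simp
      qed
    qed
  qed
  have "b \<le> len T" using bc cols_sub by fastforce
  then have "inversion T j b"
    unfolding inversion_def path_gt_posgt contained_def using jc jb(3) bnj jnb pos by simp
  then show ?thesis by blast
qed

theorem theorem3p4:
  assumes "perm_tableau T"
  shows "tab_inv T = 0 \<longleftrightarrow> L_Bell T"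
proof -
  have fin: "finite {(j, k). inversion T j k}"
  proof (rule finite_subset)
    show "{(j, k). inversion T j k} \<subseteq> {..len T} \<times> {..len T}"
      using cols_sub unfolding inversion_def by fastforce
  qed simp
  have "tab_inv T = 0 \<longleftrightarrow> {(j, k). inversion T j k} = {}"
    unfolding tab_inv_def using fin by simp
  also have "\<dots> \<longleftrightarrow> L_Bell T"
    using LBell_noinv[OF assms] notLBell_inv[OF assms] by blast
  finally show ?thesis .
qed

end
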